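(* Let $\sigma(x)=1/(1+e^{-x})$, let $k\in\mathbb{N}$ and let $t_\sigma\in\mathbb{R}$ with $\sigma^{(k)}(t_\sigma)\ne0$. Then for every $N\in\mathbb{N}$ with $N>k$ there exist $\alpha_j,\beta_j\in\mathbb{R}$ ($j=0,\dots,N-1$) and a constant $c_{54}\ge0$ such that $$f_{net,x^k}(x)=\frac{k!}{\sigma^{(k)}(t_\sigma)}\sum_{j=0}^{N-1}\alpha_j\,\sigma(\beta_jx+t_\sigma)$$ satisfies, for all $A>0$ and all $x\in[-A,A]$, $|f_{net,x^k}(x)-x^k|\le c_{54}A^N$.
   Context: $\sigma^{(k)}$ denotes the $k$-th derivative of $\sigma$. *)

theory Defs
  imports "HOL-Analysis.Analysis"
begin

definition sigmoid :: "real \<Rightarrow> real" where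
  "sigmoid x = 1 / (1 + exp (- x))"

abbreviation nth_deriv :: "nat \<Rightarrow> (real \<Rightarrow> real) \<Rightarrow> real \<Rightarrow> real" where
  "nth_deriv k f \<equiv> (deriv ^^ k) f"

end

theory Submission
  imports Defs "HOL-Computational_Algebra.Polynomial"
begin

lemma sigmoid_deriv: "(sigmoid has_real_derivative sigmoid x * (1 - sigmoid x)) (at x)"
proof -
  have pos: "1 + exp (- x) \<noteq> 0" by (smt (verit) exp_gt_zero)
  have "((\<lambda>x. 1 / (1 + exp (- x))) has_real_derivative
        - (- exp (- x)) / (1 + exp (- x))^2) (at x)"
    using pos by (auto intro!: derivative_eq_intros simp: power2_eq_square)
  moreover have "- (- exp (- x)) / (1 + exp (- x))^2 = sigmoid x * (1 - sigmoid x)"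
    using pos by (simp add: sigmoid_def field_simps power2_eq_square)
  ultimately show ?thesis unfolding sigmoid_def[abs_def] by simp
qed

fun P :: "nat \<Rightarrow> real poly" where
  "P 0 = [:0, 1:]"
| "P (Suc m) = pderiv (P m) * [:0, 1, -1:]"

lemma D_eq: "nth_deriv m sigmoid = (\<lambda>y. poly (P m) (sigmoid y))"
proof (induction m)
  case 0
  then show ?case by (simp add: fun_eq_iff)
next
  case (Suc m)
  have "\<And>y. ((\<lambda>y. poly (P m) (sigmoid y)) has_real_derivative poly (P (Suc m)) (sigmoid y)) (at y)"
  proof -
    fix y
    have "((\<lambda>y. poly (P m) (sigmoid y)) has_real_derivative
       (sigmoid y * (1 - sigmoid y)) * poly (pderiv (P m)) (sigmoid y)) (at y)"
      by (rule has_field_derivative_poly[OF sigmoid_deriv])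
    moreover have "(sigmoid y * (1 - sigmoid y)) * poly (pderiv (P m)) (sigmoid y) = poly (P (Suc m)) (sigmoid y)"
      by (simp add: algebra_simps)
    ultimately show "?thesis y" by simp
  qed
  note d = this
  have "nth_deriv (Suc m) sigmoid = deriv (\<lambda>y. poly (P m) (sigmoid y))" using Suc.IH by simp
  then show ?case using d by (simp add: fun_eq_iff DERIV_imp_deriv)
qed

lemma D_deriv: "(nth_deriv m sigmoid has_real_derivative nth_deriv (Suc m) sigmoid y) (at y)"
proof -
  have "((\<lambda>y. poly (P m) (sigmoid y)) has_real_derivative
       (sigmoid y * (1 - sigmoid y)) * poly (pderiv (P m)) (sigmoid y)) (at y)"
    by (rule has_field_derivative_poly[OF sigmoid_deriv])
  moreover have "(sigmoid y * (1 - sigmoid y)) * poly (pderiv (P m)) (sigmoid y) = poly (P (Suc m)) (sigmoid y)"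
    by (simp add: algebra_simps)
  ultimately show ?thesis unfolding D_eq by simp
qed

lemma sigmoid_bounds: "0 < sigmoid y" "sigmoid y < 1"
  unfolding sigmoid_def by (auto simp: field_simps add_pos_pos)

lemma D_bounded: "\<exists>M\<ge>0. \<forall>y. \<bar>nth_deriv m sigmoid y\<bar> \<le> M"
proof (intro exI[of _ "\<Sum>i\<le>degree (P m). \<bar>coeff (P m) i\<bar>"] conjI allI)
  fix y
  have s: "\<bar>sigmoid y\<bar> \<le> 1" using sigmoid_bounds[of y] by simp
  have "\<bar>poly (P m) (sigmoid y)\<bar> \<le> (\<Sum>i\<le>degree (P m). \<bar>coeff (P m) i * sigmoid y ^ i\<bar>)"
    unfolding poly_altdef by (rule sum_abs)
  also have "\<dots> \<le> (\<Sum>i\<le>degree (P m). \<bar>coeff (P m) i\<bar>)"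
  proof (rule sum_mono)
    fix i
    have "\<bar>sigmoid y ^ i\<bar> \<le> 1" using s by (simp add: power_le_one power_abs)
    then show "\<bar>coeff (P m) i * sigmoid y ^ i\<bar> \<le> \<bar>coeff (P m) i\<bar>"
      by (simp add: abs_mult mult_left_le)
  qed
  finally show "\<bar>nth_deriv m sigmoid y\<bar> \<le> (\<Sum>i\<le>degree (P m). \<bar>coeff (P m) i\<bar>)"
    unfolding D_eq .
qed (auto intro: sum_nonneg)

definition L :: "nat \<Rightarrow> nat \<Rightarrow> real poly" where
  "L N j = smult (1 / (\<Prod>i\<in>{..<N}-{j}. (real j - real i))) (\<Prod>i\<in>{..<N}-{j}. [:- real i, 1:])"

lemma L_at:
  assumes "i < N" "j < N"
  shows "poly (L N j) (real i) = (if i = j then 1 else 0)"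
proof (cases "i = j")
  case True
  have "(\<Prod>i\<in>{..<N}-{j}. (real j - real i)) \<noteq> 0" by (simp add: prod_zero_iff)
  then show ?thesis using True by (simp add: L_def poly_prod)
next
  case False
  have "(\<Prod>x\<in>{..<N}-{j}. poly [:- real x, 1:] (real i)) = 0"
    using False assms by (intro prod_zero) auto
  then show ?thesis using False by (simp add: L_def poly_prod)
qed

lemma L_deg: "j < N \<Longrightarrow> degree (L N j) \<le> N - 1"
proof -
  assume "j < N"
  have "degree (L N j) \<le> degree (\<Prod>i\<in>{..<N}-{j}. [:- real i, 1:])"
    unfolding L_def by (rule degree_smult_le)
  also have "\<dots> \<le> sum (degree \<circ> (\<lambda>i. [:- real i, 1:])) ({..<N}-{j})"
    by (rule degree_prod_sum_le) simp
  also have "\<dots> = card ({..<N}-{j})" by simp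
  also have "\<dots> \<le> N - 1"
    using \<open>j < N\<close> by (auto simp: card_Diff_singleton_if)
  finally show ?thesis .
qed

lemma vander:
  assumes "m < N"
  shows "(\<Sum>j<N. real j ^ m * coeff (L N j) k) = (if m = k then 1 else 0)"
proof -
  have eq: "(\<Sum>j<N. smult (real j ^ m) (L N j)) = monom 1 m"
  proof (rule poly_eqI_degree[where A = "real ` {..<N}"])
    fix x assume "x \<in> real ` {..<N}"
    then obtain i where i: "i < N" "x = real i" by auto
    have "poly (\<Sum>j<N. smult (real j ^ m) (L N j)) x = (\<Sum>j<N. real j ^ m * poly (L N j) (real i))"
      using i by (simp add: poly_sum)
    also have "\<dots> = (\<Sum>j<N. if j = i then real j ^ m else 0)"
      using i by (intro sum.cong) (auto simp: L_at)
    also have "\<dots> = real i ^ m" using i by simp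
    finally show "poly (\<Sum>j<N. smult (real j ^ m) (L N j)) x = poly (monom 1 m) x"
      using i by (simp add: poly_monom)
  next
    have c: "card (real ` {..<N}) = N" by (simp add: card_image)
    have "degree (\<Sum>j<N. smult (real j ^ m) (L N j)) \<le> N - 1"
      by (rule degree_sum_le; meson finite_lessThan order.trans degree_smult_le L_deg lessThan_iff)
    then show "degree (\<Sum>j<N. smult (real j ^ m) (L N j)) < card (real ` {..<N})"
      using c assms by linarith
    show "degree (monom (1::real) m) < card (real ` {..<N})"
      using c assms by (simp add: degree_monom_eq)
  qed
  have "(\<Sum>j<N. real j ^ m * coeff (L N j) k) = coeff (\<Sum>j<N. smult (real j ^ m) (L N j)) k"
    by (simp add: coeff_sum)
  also have "\<dots> = (if m = k then 1 else 0)" unfolding eq by (simp add: coeff_monom)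
  finally show ?thesis .
qed

lemma D_comp_deriv:
  "((\<lambda>x. nth_deriv m sigmoid (b * x + t)) has_real_derivative
     nth_deriv (Suc m) sigmoid (b * x + t) * b) (at x)"
proof -
  have "((\<lambda>x. b * x + t) has_real_derivative b) (at x)"
    by (auto intro!: derivative_eq_intros)
  from DERIV_chain2[OF D_deriv this] show ?thesis .
qed

theorem lemma9:
  fixes k N :: nat and t :: real
  assumes "nth_deriv k sigmoid t \<noteq> 0"
    and "N > k"
  shows "\<exists>(\<alpha>::nat \<Rightarrow> real) (\<beta>::nat \<Rightarrow> real) (c::real). c \<ge> 0 \<and>
           (\<forall>A::real. A > 0 \<longrightarrow> (\<forall>x\<in>{-A..A}.
              \<bar>fact k / nth_deriv k sigmoid t * (\<Sum>j<N. \<alpha> j * sigmoid (\<beta> j * x + t)) - x ^ k\<bar>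
                \<le> c * A ^ N))"
proof -
  define D where "D m = nth_deriv m sigmoid" for m
  define C where "C = fact k / D k t"
  define \<alpha> where "\<alpha> j = coeff (L N j) k" for j
  define \<beta> where "\<beta> j = real j" for j
  obtain M where M: "M \<ge> 0" "\<And>y. \<bar>D N y\<bar> \<le> M" using D_bounded[of N] unfolding D_def by blast
  define diff where "diff m x = C * (\<Sum>j<N. \<alpha> j * \<beta> j ^ m * D m (\<beta> j * x + t))" for m x
  define f where "f x = C * (\<Sum>j<N. \<alpha> j * sigmoid (\<beta> j * x + t))" for x
  define c where "c = \<bar>C\<bar> * (\<Sum>j<N. \<bar>\<alpha> j\<bar> * \<beta> j ^ N) * M / fact N"
  have CD: "C * D k t = fact k" using assms(1) unfolding C_def D_def by simp
  have init: "diff 0 = f" by (simp add: fun_eq_iff diff_def f_def D_def)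
  have der: "\<forall>m x. DERIV (diff m) x :> diff (Suc m) x"
  proof (intro allI)
    fix m x
    have "((\<lambda>x. \<Sum>j<N. \<alpha> j * \<beta> j ^ m * D m (\<beta> j * x + t)) has_real_derivative
       (\<Sum>j<N. \<alpha> j * \<beta> j ^ m * (D (Suc m) (\<beta> j * x + t) * \<beta> j))) (at x)"
      unfolding D_def
      by (intro DERIV_sum DERIV_cmult D_comp_deriv)
    then have "((\<lambda>x. C * (\<Sum>j<N. \<alpha> j * \<beta> j ^ m * D m (\<beta> j * x + t))) has_real_derivative
       C * (\<Sum>j<N. \<alpha> j * \<beta> j ^ m * (D (Suc m) (\<beta> j * x + t) * \<beta> j))) (at x)"
      by (rule DERIV_cmult)
    moreover have "(\<Sum>j<N. \<alpha> j * \<beta> j ^ m * (D (Suc m) (\<beta> j * x + t) * \<beta> j))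
       = (\<Sum>j<N. \<alpha> j * \<beta> j ^ Suc m * D (Suc m) (\<beta> j * x + t))"
      by (intro sum.cong) (auto simp: algebra_simps)
    ultimately show "DERIV (diff m) x :> diff (Suc m) x"
      unfolding diff_def[abs_def] by simp
  qed
  have d0: "diff m 0 = (if m = k then fact k else 0)" if "m < N" for m
  proof -
    have "diff m 0 = C * D m t * (\<Sum>j<N. real j ^ m * coeff (L N j) k)"
      unfolding diff_def \<alpha>_def \<beta>_def by (simp add: sum_distrib_left sum_distrib_right algebra_simps)
    also have "\<dots> = (if m = k then fact k else 0)"
      using vander[OF that] CD by simp
    finally show ?thesis .
  qed
  have c0: "c \<ge> 0" unfolding c_def using M(1)
    by (intro divide_nonneg_pos mult_nonneg_nonneg sum_nonneg) (auto simp: \<beta>_def)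
  have "\<forall>A::real. A > 0 \<longrightarrow> (\<forall>x\<in>{-A..A}. \<bar>f x - x ^ k\<bar> \<le> c * A ^ N)"
  proof (intro allI impI ballI)
    fix A x :: real
    assume "A > 0" "x \<in> {-A..A}"
    then have xA: "\<bar>x\<bar> \<le> A" by auto
    obtain \<xi> where xi: "f x = (\<Sum>m<N. (diff m 0 / fact m) * x ^ m) + (diff N \<xi> / fact N) * x ^ N"
      using Maclaurin_all_le[OF init der, of x N] by blast
    have "(\<Sum>m<N. (diff m 0 / fact m) * x ^ m) = (\<Sum>m<N. if m = k then x ^ k else 0)"
      by (intro sum.cong) (auto simp: d0)
    also have "\<dots> = x ^ k" using assms(2) by simp
    finally have fx: "f x - x ^ k = (diff N \<xi> / fact N) * x ^ N" using xi by simp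
    have "\<bar>diff N \<xi>\<bar> \<le> \<bar>C\<bar> * (\<Sum>j<N. \<bar>\<alpha> j\<bar> * \<beta> j ^ N * M)"
    proof -
      have "\<bar>diff N \<xi>\<bar> = \<bar>C\<bar> * \<bar>\<Sum>j<N. \<alpha> j * \<beta> j ^ N * D N (\<beta> j * \<xi> + t)\<bar>"
        unfolding diff_def by (simp add: abs_mult)
      also have "\<dots> \<le> \<bar>C\<bar> * (\<Sum>j<N. \<bar>\<alpha> j * \<beta> j ^ N * D N (\<beta> j * \<xi> + t)\<bar>)"
        by (intro mult_left_mono sum_abs) auto
      also have "\<dots> \<le> \<bar>C\<bar> * (\<Sum>j<N. \<bar>\<alpha> j\<bar> * \<beta> j ^ N * M)"
      proof (intro mult_left_mono sum_mono)
        fix j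
        have "\<bar>\<alpha> j * \<beta> j ^ N * D N (\<beta> j * \<xi> + t)\<bar> = \<bar>\<alpha> j\<bar> * \<beta> j ^ N * \<bar>D N (\<beta> j * \<xi> + t)\<bar>"
          by (simp add: abs_mult \<beta>_def)
        also have "\<dots> \<le> \<bar>\<alpha> j\<bar> * \<beta> j ^ N * M"
          by (intro mult_left_mono M(2)) (auto simp: \<beta>_def)
        finally show "\<bar>\<alpha> j * \<beta> j ^ N * D N (\<beta> j * \<xi> + t)\<bar> \<le> \<bar>\<alpha> j\<bar> * \<beta> j ^ N * M" .
      qed auto
      finally show ?thesis .
    qed
    then have dN: "\<bar>diff N \<xi>\<bar> / fact N \<le> c"
    proof -
      have "\<bar>C\<bar> * (\<Sum>j<N. \<bar>\<alpha> j\<bar> * \<beta> j ^ N * M) = \<bar>C\<bar> * (\<Sum>j<N. \<bar>\<alpha> j\<bar> * \<beta> j ^ N) * M"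
        by (simp add: sum_distrib_right mult.assoc)
      with \<open>\<bar>diff N \<xi>\<bar> \<le> _\<close> show ?thesis
        unfolding c_def by (intro divide_right_mono) auto
    qed
    have xN: "\<bar>x ^ N\<bar> \<le> A ^ N" unfolding power_abs by (intro power_mono xA) auto
    have "\<bar>f x - x ^ k\<bar> = \<bar>diff N \<xi>\<bar> / fact N * \<bar>x ^ N\<bar>"
      unfolding fx by (simp add: abs_mult)
    also have "\<dots> \<le> c * A ^ N"
      by (intro mult_mono dN xN c0) auto
    finally show "\<bar>f x - x ^ k\<bar> \<le> c * A ^ N" .
  qed
  then show ?thesis using c0 unfolding f_def C_def D_def by blast
qed

end
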